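(* Let $G$ be a finite simple graph and $u\in V(G)$. Then $A_G(u)=\{1,2,\ldots,\Gamma_G(u)\}$.
   Context: A Grundy-coloring of $G$ is a proper vertex coloring of $G$ with nonempty color classes $C_1,\ldots,C_k$ (vertices of $C_i$ have color $i$) such that for all $i<j$ every vertex of $C_j$ has a neighbor in $C_i$. For $u\in V(G)$, $\Gamma_G(u)$ is the maximum integer $j$ such that there is a Grundy-coloring of $G$ in which $u$ has color $j$, and $A_G(u)$ is the set of all integers $j$ such that there exists a Grundy-coloring of $G$ in which $u$ has color $j$. *)

theory Defs
  imports Main
begin

definition simple_graph :: "'a set \<Rightarrow> ('a \<Rightarrow> 'a \<Rightarrow> bool) \<Rightarrow> bool" where
  "simple_graph V E \<longleftrightarrow> finite V \<and> (\<forall>x y. E x y \<longrightarrow> x \<in> V \<and> y \<in> V)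
     \<and> (\<forall>x y. E x y \<longrightarrow> E y x) \<and> (\<forall>x. \<not> E x x)"

definition grundy_coloring :: "'a set \<Rightarrow> ('a \<Rightarrow> 'a \<Rightarrow> bool) \<Rightarrow> nat \<Rightarrow> ('a \<Rightarrow> nat) \<Rightarrow> bool" where
  "grundy_coloring V E k c \<longleftrightarrow>
     (\<forall>v\<in>V. c v \<in> {1..k})
     \<and> (\<forall>i\<in>{1..k}. \<exists>v\<in>V. c v = i)
     \<and> (\<forall>u\<in>V. \<forall>v\<in>V. E u v \<longrightarrow> c u \<noteq> c v)
     \<and> (\<forall>v\<in>V. \<forall>i. 1 \<le> i \<and> i < c v \<longrightarrow> (\<exists>w\<in>V. E v w \<and> c w = i))"

definition A_G :: "'a set \<Rightarrow> ('a \<Rightarrow> 'a \<Rightarrow> bool) \<Rightarrow> 'a \<Rightarrow> nat set" where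
  "A_G V E u = {j. \<exists>k c. grundy_coloring V E k c \<and> c u = j}"

definition Gamma_G :: "'a set \<Rightarrow> ('a \<Rightarrow> 'a \<Rightarrow> bool) \<Rightarrow> 'a \<Rightarrow> nat" where
  "Gamma_G V E u = Max (A_G V E u)"

end

theory Submission
  imports Defs
begin

definition pg :: "'a set \<Rightarrow> ('a \<Rightarrow> 'a \<Rightarrow> bool) \<Rightarrow> ('a \<Rightarrow> nat) \<Rightarrow> bool" where
  "pg W E c \<longleftrightarrow> (\<forall>v\<in>W. c v \<ge> 1) \<and> (\<forall>x\<in>W. \<forall>y\<in>W. E x y \<longrightarrow> c x \<noteq> c y)
     \<and> (\<forall>v\<in>W. \<forall>l. 1 \<le> l \<and> l < c v \<longrightarrow> (\<exists>w\<in>W. E v w \<and> c w = l))"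

lemma pg_step:
  assumes sym: "\<And>x y. E x y \<Longrightarrow> E y x" and irr: "\<And>x. \<not> E x x"
    and fin: "finite W" and p: "pg W E c" and xn: "x \<notin> W"
  shows "\<exists>d. pg (insert x W) E d \<and> (\<forall>v\<in>W. d v = c v)"
proof -
  let ?P = "\<lambda>n::nat. n \<ge> 1 \<and> (\<forall>w\<in>W. E x w \<longrightarrow> c w \<noteq> n)"
  define n0 where "n0 = (LEAST n. ?P n)"
  have ex: "\<exists>n. ?P n"
  proof -
    have "finite (c ` W)" using fin by simp
    then have "finite (insert 0 (c ` W))" by simp
    then obtain n :: nat where "n \<notin> insert 0 (c ` W)"
      using ex_new_if_finite[OF infinite_UNIV_nat] by blast
    then have "n \<notin> c ` W" "n \<ge> 1" by auto
    then show ?thesis by auto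
  qed
  have P0: "?P n0" unfolding n0_def by (rule LeastI_ex[OF ex])
  have below: "\<And>l. l < n0 \<Longrightarrow> \<not> ?P l" unfolding n0_def by (rule not_less_Least)
  define d where "d = c(x := n0)"
  have dW: "\<forall>v\<in>W. d v = c v" using xn d_def by auto
  have "pg (insert x W) E d"
    unfolding pg_def
  proof (intro conjI ballI allI impI)
    fix v assume "v \<in> insert x W" then show "1 \<le> d v" using p P0 dW d_def unfolding pg_def by auto
  next
    fix a b assume a: "a \<in> insert x W" and b: "b \<in> insert x W" and e: "E a b"
    show "d a \<noteq> d b"
    proof (cases "a = x")
      case True
      then have "b \<noteq> x" using irr e by auto
      then show ?thesis using True P0 e b dW d_def by auto
    next
      case False
      show ?thesis
      proof (cases "b = x")
        case True
        then show ?thesis using False P0 sym[OF e] a dW d_def by fastforce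
      next
        case False2: False
        then show ?thesis using False a b e p dW unfolding pg_def by auto
      qed
    qed
  next
    fix v l assume v: "v \<in> insert x W" and l: "1 \<le> l \<and> l < d v"
    show "\<exists>w\<in>insert x W. E v w \<and> d w = l"
    proof (cases "v = x")
      case True
      then have "l < n0" using l d_def by auto
      then have "\<not> ?P l" by (rule below)
      then obtain w where "w \<in> W" "E x w" "c w = l" using l by auto
      then show ?thesis using True dW by auto
    next
      case False
      then have "v \<in> W" "l < c v" using v l dW by auto
      then obtain w where "w \<in> W" "E v w" "c w = l" using p l unfolding pg_def by blast
      then show ?thesis using dW by auto
    qed
  qed
  then show ?thesis using dW by blast
qed

lemma pg_extend:
  assumes sym: "\<And>x y. E x y \<Longrightarrow> E y x" and irr: "\<And>x. \<not> E x x"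
    and finF: "finite F"
  shows "finite W \<Longrightarrow> pg W E c \<Longrightarrow> \<exists>d. pg (W \<union> F) E d \<and> (\<forall>v\<in>W. d v = c v)"
  using finF
proof (induction F rule: finite_induct)
  case empty
  then show ?case by auto
next
  case (insert x F)
  then obtain d where d: "pg (W \<union> F) E d" "\<forall>v\<in>W. d v = c v" by blast
  show ?case
  proof (cases "x \<in> W \<union> F")
    case True
    then have "W \<union> insert x F = W \<union> F" by auto
    then show ?thesis using d by auto
  next
    case False
    obtain d' where "pg (insert x (W \<union> F)) E d'" "\<forall>v\<in>W \<union> F. d' v = d v"
      using pg_step[OF sym irr _ d(1) False] insert by blast
    then show ?thesis using d by auto
  qed
qed

lemma pg_grundy:
  assumes "pg V E c" "finite V" "V \<noteq> {}"
  shows "grundy_coloring V E (Max (c ` V)) c"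
proof -
  let ?k = "Max (c ` V)"
  have fin: "finite (c ` V)" using assms by simp
  have "?k \<in> c ` V" by (rule Max_in[OF fin]) (use assms in auto)
  then obtain v where v: "v \<in> V" "c v = ?k" by (metis imageE)
  show ?thesis unfolding grundy_coloring_def
  proof (intro conjI ballI allI impI)
    fix w assume "w \<in> V" then show "c w \<in> {1..?k}" using assms(1) fin unfolding pg_def by auto
  next
    fix i assume i: "i \<in> {1..?k}"
    show "\<exists>v\<in>V. c v = i"
    proof (cases "i = ?k")
      case True then show ?thesis using v by auto
    next
      case False
      then have "1 \<le> i \<and> i < c v" using i v by auto
      then show ?thesis using assms(1) v unfolding pg_def by blast
    qed
  next
    show "\<And>a b. a \<in> V \<Longrightarrow> b \<in> V \<Longrightarrow> E a b \<Longrightarrow> c a \<noteq> c b" using assms(1) unfolding pg_def by blast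
  next
    show "\<And>a i. a \<in> V \<Longrightarrow> 1 \<le> i \<and> i < c a \<Longrightarrow> \<exists>w\<in>V. E a w \<and> c w = i"
      using assms(1) unfolding pg_def by blast
  qed
qed

lemma grundy_bound:
  assumes "grundy_coloring V E k c" "finite V"
  shows "k \<le> card V"
proof -
  have "{1..k} \<subseteq> c ` V" using assms(1) unfolding grundy_coloring_def by fastforce
  then have "card {1..k} \<le> card (c ` V)" using assms(2) by (intro card_mono) auto
  also have "\<dots> \<le> card V" by (rule card_image_le[OF assms(2)])
  finally show ?thesis by simp
qed

theorem proposition1:
  fixes V :: "'a set" and E :: "'a \<Rightarrow> 'a \<Rightarrow> bool" and u :: 'a
  assumes "simple_graph V E" and "u \<in> V"
  shows "A_G V E u = {1..Gamma_G V E u}"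
proof -
  have finV: "finite V" and inV: "\<And>x y. E x y \<Longrightarrow> x \<in> V \<and> y \<in> V"
    and sym: "\<And>x y. E x y \<Longrightarrow> E y x" and irr: "\<And>x. \<not> E x x"
    using assms(1) unfolding simple_graph_def by auto
  have Vne: "V \<noteq> {}" using assms(2) by auto
  have sub: "A_G V E u \<subseteq> {1..card V}"
  proof
    fix j assume "j \<in> A_G V E u"
    then obtain k c where g: "grundy_coloring V E k c" "c u = j" unfolding A_G_def by auto
    then have "j \<in> {1..k}" using assms(2) unfolding grundy_coloring_def by auto
    then show "j \<in> {1..card V}" using grundy_bound[OF g(1) finV] by auto
  qed
  then have finA: "finite (A_G V E u)" by (rule finite_subset) simp
  have "pg {} E c" for c :: "'a \<Rightarrow> nat" unfolding pg_def by auto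
  then obtain c0 where "pg ({} \<union> V) E c0"
    using pg_extend[of E V "{}"] sym irr finV by blast
  then have "pg V E c0" by simp
  then have "c0 u \<in> A_G V E u" using pg_grundy[OF _ finV Vne] unfolding A_G_def by blast
  then have neA: "A_G V E u \<noteq> {}" by auto
  have GA: "Gamma_G V E u \<in> A_G V E u" unfolding Gamma_G_def using Max_in[OF finA neA] .
  show ?thesis
  proof
    show "A_G V E u \<subseteq> {1..Gamma_G V E u}"
    proof
      fix j assume j: "j \<in> A_G V E u"
      then have "j \<le> Gamma_G V E u" unfolding Gamma_G_def using Max_ge[OF finA] by auto
      moreover have "j \<ge> 1" using j sub by auto
      ultimately show "j \<in> {1..Gamma_G V E u}" by auto
    qed
  next
    show "{1..Gamma_G V E u} \<subseteq> A_G V E u"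
    proof
      fix i assume i: "i \<in> {1..Gamma_G V E u}"
      obtain k c where g: "grundy_coloring V E k c" "c u = Gamma_G V E u"
        using GA unfolding A_G_def by auto
      define m where "m = Gamma_G V E u - i"
      define W where "W = {v\<in>V. c v > m}"
      define d where "d = (\<lambda>v. c v - m)"
      have gc: "\<forall>v\<in>V. c v \<in> {1..k}" "\<forall>a\<in>V. \<forall>b\<in>V. E a b \<longrightarrow> c a \<noteq> c b"
        "\<forall>v\<in>V. \<forall>l. 1 \<le> l \<and> l < c v \<longrightarrow> (\<exists>w\<in>V. E v w \<and> c w = l)"
        using g(1) unfolding grundy_coloring_def by auto
      have uW: "u \<in> W" using i g(2) assms(2) unfolding W_def m_def by auto
      have du: "d u = i" using i g(2) unfolding d_def m_def by auto
      have pW: "pg W E d" unfolding pg_def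
      proof (intro conjI ballI allI impI)
        fix v assume "v \<in> W" then show "1 \<le> d v" unfolding W_def d_def by auto
      next
        fix a b assume "a \<in> W" "b \<in> W" "E a b"
        then show "d a \<noteq> d b" using gc(2) unfolding W_def d_def by fastforce
      next
        fix v l assume v: "v \<in> W" and l: "1 \<le> l \<and> l < d v"
        then have "1 \<le> l + m \<and> l + m < c v" unfolding W_def d_def by auto
        then obtain w where "w \<in> V" "E v w" "c w = l + m" using gc(3) v unfolding W_def by blast
        then show "\<exists>w\<in>W. E v w \<and> d w = l" using l unfolding W_def d_def by force
      qed
      have finW: "finite W" using finV unfolding W_def by auto
      obtain d' where d': "pg (W \<union> V) E d'" "\<forall>v\<in>W. d' v = d v"
        using pg_extend[OF sym irr finV finW pW] by blast
      have "W \<union> V = V" unfolding W_def by auto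
      then have "grundy_coloring V E (Max (d' ` V)) d'" using pg_grundy[OF _ finV Vne] d'(1) by simp
      moreover have "d' u = i" using d'(2) uW du by auto
      ultimately show "i \<in> A_G V E u" unfolding A_G_def by blast
    qed
  qed
qed

end
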